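(* For all integers $x, y \in \mathbb{N}$, every set of $x$ vertices of a $y$-dimensional hypercube-like graph induces at most $\frac{1}{2} x \log x$ edges.
   Context: For $y \in \mathbb{N}$, a graph $H$ is $y$-dimensional hypercube-like if there is a partition $V(H) = \bigcup_{S \subseteq [y]} V_S$ (parts may be empty) such that: (1) for every edge $uv \in E(H)$ there are $S, T \subseteq [y]$ with $|S \triangle T| = 1$, $u \in V_S$ and $v \in V_T$; (2) for all $S, T \subseteq [y]$ with $|S \triangle T| = 1$, the bipartite graph $H[V_S, V_T]$ of edges between $V_S$ and $V_T$ is a matching (not necessarily perfect or non-empty). Logarithms are in base 2. *)

theory Defs
  imports Complex_Main
begin

definition simple_graph :: "'a set \<Rightarrow> 'a set set \<Rightarrow> bool" where
  "simple_graph V E \<longleftrightarrow> (\<forall>e\<in>E. e \<subseteq> V \<and> card e = 2)"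

text \<open>The partition V = union of V_S (S subset of [y]) is encoded by the map part
  assigning to each vertex v the unique S with v in V_S; so V_S = {v in V. part v = S}.\<close>
definition hypercube_like_partition ::
  "nat \<Rightarrow> 'a set \<Rightarrow> 'a set set \<Rightarrow> ('a \<Rightarrow> nat set) \<Rightarrow> bool" where
  "hypercube_like_partition y V E part \<longleftrightarrow>
     (\<forall>v\<in>V. part v \<subseteq> {1..y}) \<and>
     (\<forall>u v. {u, v} \<in> E \<longrightarrow> card ((part u - part v) \<union> (part v - part u)) = 1) \<and>
     (\<forall>S T. S \<subseteq> {1..y} \<longrightarrow> T \<subseteq> {1..y} \<longrightarrow> card ((S - T) \<union> (T - S)) = 1 \<longrightarrow>
        (\<forall>u\<in>V. \<forall>v\<in>V. \<forall>w\<in>V.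
            part u = S \<and> part v = T \<and> part w = T \<and> {u, v} \<in> E \<and> {u, w} \<in> E
            \<longrightarrow> v = w))"

definition hypercube_like :: "nat \<Rightarrow> 'a set \<Rightarrow> 'a set set \<Rightarrow> bool" where
  "hypercube_like y V E \<longleftrightarrow> simple_graph V E \<and> (\<exists>part. hypercube_like_partition y V E part)"

definition induced_edges :: "'a set set \<Rightarrow> 'a set \<Rightarrow> nat" where
  "induced_edges E X = card {e \<in> E. e \<subseteq> X}"

end

theory Submission imports Defs begin

lemma log4: "log 2 (4::real) = 2"
proof -
  have "log 2 ((2::real) ^ 2) = 2" using log_pow_cancel[of "2::real" 2] by simp
  thus ?thesis by simp
qed

lemma key_ineq:
  fixes a b :: real
  assumes "0 < a" "a \<le> b"
  shows "a * log 2 a + b * log 2 b + 2 * a \<le> (a + b) * log 2 (a + b)"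
proof (cases "3 * a \<le> b")
  case True
  have "log 2 (4 * a) \<le> log 2 (a + b)" using True assms by simp
  moreover have "log 2 (4 * a) = 2 + log 2 a" using assms
    by (simp add: log_mult log4)
  ultimately have 1: "a * (2 + log 2 a) \<le> a * log 2 (a + b)"
    using assms by (metis mult_left_mono less_imp_le)
  have "log 2 b \<le> log 2 (a + b)" using assms by simp
  hence 2: "b * log 2 b \<le> b * log 2 (a + b)" using assms by (simp add: mult_left_mono)
  show ?thesis using 1 2 by (simp add: algebra_simps)
next
  case False
  define g where "g = (\<lambda>t. (t + b) * log 2 (t + b) - t * log 2 t - b * log 2 b - 2 * t)"
  have gb: "g b = 0"
  proof -
    have "log 2 (b + b) = 1 + log 2 b" using assms by (simp add: log_mult flip: mult_2)
    thus ?thesis unfolding g_def by (simp add: algebra_simps)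
  qed
  have "g b \<le> g a"
  proof (rule DERIV_nonpos_imp_nonincreasing[OF assms(2)])
    fix x assume x: "a \<le> x" "x \<le> b"
    hence xp: "0 < x" using assms by simp
    have "DERIV g x :> (log 2 (x + b) + 1 / ln 2 - (log 2 x + 1 / ln 2) - 2)"
      unfolding g_def using xp assms x
      apply (intro derivative_eq_intros refl | simp)+
      done
    moreover have "log 2 (x + b) - log 2 x \<le> 2"
    proof -
      have "x + b \<le> 4 * x" using x False by simp
      hence "log 2 (x + b) \<le> log 2 (4 * x)" using xp assms by simp
      also have "\<dots> = 2 + log 2 x" using xp
        by (simp add: log_mult log4)
      finally show ?thesis by simp
    qed
    ultimately show "\<exists>y. DERIV g x :> y \<and> y \<le> 0" by (intro exI[of _ _]) auto
  qed
  then show ?thesis using gb unfolding g_def by simp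
qed

lemma comb_ineq:
  fixes a b m :: real
  assumes "1 \<le> a" "1 \<le> b" "m \<le> a" "m \<le> b"
  shows "1/2 * a * log 2 a + 1/2 * b * log 2 b + m \<le> 1/2 * (a + b) * log 2 (a + b)"
proof (cases "a \<le> b")
  case True
  have k: "a * log 2 a + b * log 2 b + 2 * a \<le> (a + b) * log 2 (a + b)"
    using key_ineq[OF _ True] assms by linarith
  have "2 * m \<le> 2 * a" using assms by linarith
  hence "a * log 2 a + b * log 2 b + 2 * m \<le> (a + b) * log 2 (a + b)" using k by linarith
  thus ?thesis by (simp add: field_simps)
next
  case False
  have k: "b * log 2 b + a * log 2 a + 2 * b \<le> (b + a) * log 2 (b + a)"
    using key_ineq[of b a] False assms by linarith
  have "2 * m \<le> 2 * b" using assms by linarith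
  hence "a * log 2 a + b * log 2 b + 2 * m \<le> (a + b) * log 2 (a + b)" using k by (simp add: add.commute)
  thus ?thesis by (simp add: field_simps)
qed

lemma symdiff_single:
  assumes "card ((A - B) \<union> (B - A)) = 1" "i \<in> (A - B) \<union> (B - A)"
  shows "B = (A - {i}) \<union> ({i} - A)"
proof -
  obtain z where "(A - B) \<union> (B - A) = {z}" using assms(1) card_1_singletonE by blast
  with assms(2) have "(A - B) \<union> (B - A) = {i}" by auto
  thus ?thesis by blast
qed

context
  fixes y :: nat and V :: "'a set" and E :: "'a set set" and part
  assumes sg: "simple_graph V E" and hp: "hypercube_like_partition y V E part"
begin

lemma hp1: "v \<in> V \<Longrightarrow> part v \<subseteq> {1..y}"
  using hp[unfolded hypercube_like_partition_def, THEN conjunct1] by blast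

lemma hp2: "{u, v} \<in> E \<Longrightarrow> card ((part u - part v) \<union> (part v - part u)) = 1"
  using hp[unfolded hypercube_like_partition_def, THEN conjunct2, THEN conjunct1] by blast

lemma hp3: "S \<subseteq> {1..y} \<Longrightarrow> T \<subseteq> {1..y} \<Longrightarrow> card ((S - T) \<union> (T - S)) = 1 \<Longrightarrow>
   u \<in> V \<Longrightarrow> v \<in> V \<Longrightarrow> w \<in> V \<Longrightarrow> part u = S \<Longrightarrow> part v = T \<Longrightarrow> part w = T \<Longrightarrow>
   {u, v} \<in> E \<Longrightarrow> {u, w} \<in> E \<Longrightarrow> v = w"
  using hp[unfolded hypercube_like_partition_def, THEN conjunct2, THEN conjunct2, rule_format, of S T u v w]
  by blast

lemma match:
  assumes "u \<in> V" "v \<in> V" "w \<in> V" "{u,v} \<in> E" "{u,w} \<in> E" "part v = part w"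
  shows "v = w"
proof -
  have c: "card ((part u - part v) \<union> (part v - part u)) = 1"
    using hp2 assms by blast
  show ?thesis using hp3[OF hp1[OF assms(1)] hp1[OF assms(2)] c assms(1-3) refl refl] assms by simp
qed

lemma main:
  "finite X \<Longrightarrow> X \<subseteq> V \<Longrightarrow> real (induced_edges E X) \<le> 1/2 * real (card X) * log 2 (real (card X))"
proof (induction "card X" arbitrary: X rule: less_induct)
  case less
  have XV: "X \<subseteq> V" using less.prems by auto
  have finE: "finite {e \<in> E. e \<subseteq> Z}" if "Z \<subseteq> X" for Z
    by (rule finite_subset[of _ "Pow X"]) (use less.prems that in auto)
  have rhs0: "0 \<le> 1/2 * real (card X) * log 2 (real (card X))"
  proof (cases "card X = 0")
    case False thus ?thesis by simp
  qed simp
  show ?case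
  proof (cases "\<exists>u\<in>X. \<exists>v\<in>X. part u \<noteq> part v")
    case False
    have "{e \<in> E. e \<subseteq> X} = {}"
    proof (rule ccontr)
      assume "{e \<in> E. e \<subseteq> X} \<noteq> {}"
      then obtain e where e: "e \<in> E" "e \<subseteq> X" by auto
      have "card e = 2" using sg e(1) unfolding simple_graph_def by blast
      then obtain u v where uv: "e = {u,v}" unfolding card_2_iff by blast
      have "card ((part u - part v) \<union> (part v - part u)) = 1"
        using hp2[of u v] e uv by simp
      moreover have "part u = part v" using False e uv by auto
      ultimately show False by simp
    qed
    hence "induced_edges E X = 0" unfolding induced_edges_def by (simp only: card.empty)
    thus ?thesis using rhs0 by simp
  next
    case True
    then obtain u v where uv: "u \<in> X" "v \<in> X" "part u \<noteq> part v" by auto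
    then obtain i where i: "i \<in> (part u - part v) \<union> (part v - part u)" by blast
    define X1 where "X1 = {w \<in> X. i \<in> part w}"
    define X0 where "X0 = {w \<in> X. i \<notin> part w}"
    have X01: "X = X0 \<union> X1" "X0 \<inter> X1 = {}" unfolding X0_def X1_def by auto
    have ne: "X0 \<noteq> {}" "X1 \<noteq> {}" using uv i unfolding X0_def X1_def by auto
    have fin: "finite X0" "finite X1" using less.prems unfolding X0_def X1_def by auto
    have cX: "card X = card X0 + card X1" using X01 fin card_Un_disjoint by metis
    have lt: "card X0 < card X" "card X1 < card X" using cX ne fin by auto
    have IH0: "real (induced_edges E X0) \<le> 1/2 * real (card X0) * log 2 (real (card X0))"
      using less.hyps[OF lt(1)] fin less.prems unfolding X0_def by auto
    have IH1: "real (induced_edges E X1) \<le> 1/2 * real (card X1) * log 2 (real (card X1))"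
      using less.hyps[OF lt(2)] fin less.prems unfolding X1_def by auto
    define C where "C = {e \<in> E. e \<subseteq> X \<and> \<not> e \<subseteq> X0 \<and> \<not> e \<subseteq> X1}"
    have finC: "finite C" by (rule finite_subset[OF _ finE[OF order_refl]]) (auto simp: C_def)
    have split: "{e \<in> E. e \<subseteq> X} \<subseteq> {e \<in> E. e \<subseteq> X0} \<union> {e \<in> E. e \<subseteq> X1} \<union> C"
      unfolding C_def using X01 by auto
    have "card {e \<in> E. e \<subseteq> X} \<le> card ({e \<in> E. e \<subseteq> X0} \<union> {e \<in> E. e \<subseteq> X1} \<union> C)"
      by (rule card_mono[OF _ split]) (use finE finC X01 in auto)
    also have "\<dots> \<le> card {e \<in> E. e \<subseteq> X0} + card {e \<in> E. e \<subseteq> X1} + card C"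
      by (meson card_Un_le add_le_mono le_trans order_refl)
    finally have tot: "induced_edges E X \<le> induced_edges E X0 + induced_edges E X1 + card C"
      unfolding induced_edges_def .
    have Cform: "\<exists>a\<in>X0. \<exists>b\<in>X1. e = {a,b}" if "e \<in> C" for e
    proof -
      have "card e = 2" using sg that unfolding simple_graph_def C_def by blast
      then obtain p q where pq: "e = {p,q}" unfolding card_2_iff by blast
      show ?thesis using that X01 unfolding pq C_def by auto
    qed
    have eE: "e \<in> E" if "e \<in> C" for e using that unfolding C_def by auto
    have edge_part: "part q = (part p - {i}) \<union> ({i} - part p)" if "{p,q} \<in> E" "p \<in> X0" "q \<in> X1" for p q
    proof (rule symdiff_single)
      show "card ((part p - part q) \<union> (part q - part p)) = 1"
        using hp2[of p q] that by simp
      show "i \<in> (part p - part q) \<union> (part q - part p)" using that unfolding X0_def X1_def by auto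
    qed
    have edge_part': "part q = (part p - {i}) \<union> ({i} - part p)" if "{p,q} \<in> E" "p \<in> X1" "q \<in> X0" for p q
    proof (rule symdiff_single)
      show "card ((part p - part q) \<union> (part q - part p)) = 1"
        using hp2[of p q] that by simp
      show "i \<in> (part p - part q) \<union> (part q - part p)" using that unfolding X0_def X1_def by auto
    qed
    have C0: "card C \<le> card X0"
    proof -
      have "C \<subseteq> (\<Union>p\<in>X0. {e \<in> C. p \<in> e})" using Cform by blast
      hence "card C \<le> card (\<Union>p\<in>X0. {e \<in> C. p \<in> e})"
        by (intro card_mono finite_subset[OF _ finC]) auto
      also have "\<dots> \<le> (\<Sum>p\<in>X0. card {e \<in> C. p \<in> e})" by (rule card_UN_le[OF fin(1)])
      also have "\<dots> \<le> (\<Sum>p\<in>X0. 1)"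
      proof (rule sum_mono)
        fix p assume p: "p \<in> X0"
        have "\<forall>e1\<in>{e \<in> C. p \<in> e}. \<forall>e2\<in>{e \<in> C. p \<in> e}. e1 = e2"
        proof (intro ballI)
          fix e1 e2 assume e1: "e1 \<in> {e \<in> C. p \<in> e}" and e2: "e2 \<in> {e \<in> C. p \<in> e}"
          obtain q1 where q1: "q1 \<in> X1" "e1 = {p,q1}" using Cform[of e1] e1 p X01 by blast
          obtain q2 where q2: "q2 \<in> X1" "e2 = {p,q2}" using Cform[of e2] e2 p X01 by blast
          have E1: "{p,q1} \<in> E" "{p,q2} \<in> E" using eE e1 e2 q1 q2 by auto
          have "q1 = q2"
            by (rule match[OF _ _ _ E1]) (use XV p q1 q2 X01 edge_part[OF E1(1) p q1(1)] edge_part[OF E1(2) p q2(1)] in auto)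
          thus "e1 = e2" using q1 q2 by simp
        qed
        thus "card {e \<in> C. p \<in> e} \<le> 1" using card_le_Suc0_iff_eq[of "{e \<in> C. p \<in> e}"] finC by auto
      qed
      finally show ?thesis by simp
    qed
    have C1: "card C \<le> card X1"
    proof -
      have "C \<subseteq> (\<Union>p\<in>X1. {e \<in> C. p \<in> e})" using Cform by blast
      hence "card C \<le> card (\<Union>p\<in>X1. {e \<in> C. p \<in> e})"
        by (intro card_mono finite_subset[OF _ finC]) auto
      also have "\<dots> \<le> (\<Sum>p\<in>X1. card {e \<in> C. p \<in> e})" by (rule card_UN_le[OF fin(2)])
      also have "\<dots> \<le> (\<Sum>p\<in>X1. 1)"
      proof (rule sum_mono)
        fix p assume p: "p \<in> X1"
        have "\<forall>e1\<in>{e \<in> C. p \<in> e}. \<forall>e2\<in>{e \<in> C. p \<in> e}. e1 = e2"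
        proof (intro ballI)
          fix e1 e2 assume e1: "e1 \<in> {e \<in> C. p \<in> e}" and e2: "e2 \<in> {e \<in> C. p \<in> e}"
          obtain q1 where q1: "q1 \<in> X0" "e1 = {p,q1}" using Cform[of e1] e1 p X01 by blast
          obtain q2 where q2: "q2 \<in> X0" "e2 = {p,q2}" using Cform[of e2] e2 p X01 by blast
          have E1: "{p,q1} \<in> E" "{p,q2} \<in> E" using eE e1 e2 q1 q2 by auto
          have "q1 = q2"
            by (rule match[OF _ _ _ E1]) (use XV p q1 q2 X01 edge_part'[OF E1(1) p q1(1)] edge_part'[OF E1(2) p q2(1)] in auto)
          thus "e1 = e2" using q1 q2 by simp
        qed
        thus "card {e \<in> C. p \<in> e} \<le> 1" using card_le_Suc0_iff_eq[of "{e \<in> C. p \<in> e}"] finC by auto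
      qed
      finally show ?thesis by simp
    qed
    have a1: "1 \<le> real (card X0)" "1 \<le> real (card X1)" using ne fin by (auto simp: Suc_le_eq card_gt_0_iff)
    have "real (induced_edges E X) \<le> real (induced_edges E X0) + real (induced_edges E X1) + real (card C)"
      using tot by linarith
    also have "\<dots> \<le> 1/2 * real (card X0) * log 2 (real (card X0)) + 1/2 * real (card X1) * log 2 (real (card X1)) + real (card C)"
      using IH0 IH1 by linarith
    also have "\<dots> \<le> 1/2 * (real (card X0) + real (card X1)) * log 2 (real (card X0) + real (card X1))"
      by (rule comb_ineq) (use a1 C0 C1 in auto)
    finally show ?thesis using cX by simp
  qed
qed

end

theorem lemma5p1:
  fixes y x :: nat and V :: "'a set" and E :: "'a set set" and X :: "'a set"
  assumes "hypercube_like y V E"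
    and "X \<subseteq> V" and "finite X" and "card X = x"
  shows "real (induced_edges E X) \<le> 1/2 * real x * log 2 (real x)"
proof -
  from assms(1) obtain part where "simple_graph V E" "hypercube_like_partition y V E part"
    unfolding hypercube_like_def by blast
  from main[OF this assms(3,2)] assms(4) show ?thesis by simp
qed

end
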